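(* Suppose $\Lambda_i\in\mathcal H_I$ with $0<\lambda_i^-\le\lambda_i^+<1$ for $i\in[n]$, and $w_1,\dots,w_n$ are continuous and subadditive capacities. Let $$\kappa=\inf_{(A_1,\dots,A_n)\in\Pi_n(\Omega)}\ \min_{i\in[n]}\Big(\frac{w_i(A_i)}{\lambda_i^-}\vee\max_{j\ne i}\frac{w_j(A_j)}{\lambda_j^+}\Big).$$ (i) If $\kappa<1$, then $\Gamma_{\mathbf\Lambda,\mathbf w}(X)=-\infty$ for every $X\in\mathcal X$. (ii) If $\kappa>1$, then $\Gamma_{\mathbf\Lambda,\mathbf w}(X)>-\infty$ for every $X\in\mathcal X$.
   Context: $\mathcal X$: real-valued random variables on $(\Omega,\mathcal F)$. Capacity: monotone $w:\mathcal F\to[0,1]$, $w(\emptyset)=0$, $w(\Omega)=1$; continuous if $w(A_k)\to0$ whenever $A_k\downarrow\emptyset$; subadditive if $w(A\cup B)\le w(A)+w(B)$. $\mathcal H_I$: increasing functions $\mathbb R\to(0,1)$; $\lambda_i^-=\inf_x\Lambda_i(x)$, $\lambda_i^+=\sup_x\Lambda_i(x)$. $\Pi_n(\Omega)$: measurable partitions of $\Omega$ into $n$ sets. $\mathcal A^{\mathbf\Lambda,\mathbf w}_x=\{\bigcup_iA_i: A_i\in\mathcal F, w_i(A_i)\le\Lambda_i(y_i)\ \forall i\text{ for some }(y_i)\in\mathbb R^n,\sum_iy_i=x\}$ and $\Gamma_{\mathbf\Lambda,\mathbf w}(X)=\inf\{x\in\mathbb R:\{X>x\}\in\mathcal A^{\mathbf\Lambda,\mathbf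 w}_x\}$ (the inf-convolution of the $\Lambda_i\mathrm{VaR}^{w_i}$). *)

theory Defs
  imports "HOL-Analysis.Analysis"
begin

definition capacity :: "'a measure \<Rightarrow> ('a set \<Rightarrow> real) \<Rightarrow> bool" where
  "capacity M w \<longleftrightarrow>
     (\<forall>A\<in>sets M. 0 \<le> w A \<and> w A \<le> 1) \<and>
     (\<forall>A\<in>sets M. \<forall>B\<in>sets M. A \<subseteq> B \<longrightarrow> w A \<le> w B) \<and>
     w {} = 0 \<and> w (space M) = 1"

definition continuous_capacity :: "'a measure \<Rightarrow> ('a set \<Rightarrow> real) \<Rightarrow> bool" where
  "continuous_capacity M w \<longleftrightarrow>
     (\<forall>A :: nat \<Rightarrow> 'a set. (\<forall>k. A k \<in> sets M) \<longrightarrow> decseq A \<longrightarrow> (\<Inter>k. A k) = {}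
        \<longrightarrow> (\<lambda>k. w (A k)) \<longlonglongrightarrow> 0)"

definition subadditive_capacity :: "'a measure \<Rightarrow> ('a set \<Rightarrow> real) \<Rightarrow> bool" where
  "subadditive_capacity M w \<longleftrightarrow>
     (\<forall>A\<in>sets M. \<forall>B\<in>sets M. w (A \<union> B) \<le> w A + w B)"

definition H_I :: "(real \<Rightarrow> real) set" where
  "H_I = {L. mono L \<and> (\<forall>x. 0 < L x \<and> L x < 1)}"

definition lam_minus :: "(real \<Rightarrow> real) \<Rightarrow> real" where
  "lam_minus L = Inf (range L)"

definition lam_plus :: "(real \<Rightarrow> real) \<Rightarrow> real" where
  "lam_plus L = Sup (range L)"

definition partitions :: "'a measure \<Rightarrow> nat \<Rightarrow> (nat \<Rightarrow> 'a set) set" where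
  "partitions M n = {A. (\<forall>i<n. A i \<in> sets M) \<and> disjoint_family_on A {..<n}
                         \<and> (\<Union>i<n. A i) = space M}"

definition admissible_sets ::
  "'a measure \<Rightarrow> nat \<Rightarrow> (nat \<Rightarrow> real \<Rightarrow> real) \<Rightarrow> (nat \<Rightarrow> 'a set \<Rightarrow> real) \<Rightarrow> real \<Rightarrow> 'a set set" where
  "admissible_sets M n L w x =
     {\<Union>i<n. A i | A. (\<forall>i<n. A i \<in> sets M) \<and>
        (\<exists>y :: nat \<Rightarrow> real. (\<Sum>i<n. y i) = x \<and> (\<forall>i<n. w i (A i) \<le> L i (y i)))}"

text \<open>Inf-convolution of the Lambda-VaR's, valued in the extended reals.\<close>
definition Gamma ::
  "'a measure \<Rightarrow> nat \<Rightarrow> (nat \<Rightarrow> real \<Rightarrow> real) \<Rightarrow> (nat \<Rightarrow> 'a set \<Rightarrow> real) \<Rightarrow> ('a \<Rightarrow> real) \<Rightarrow> ereal" where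
  "Gamma M n L w X = Inf {ereal x | x. {\<omega>\<in>space M. X \<omega> > x} \<in> admissible_sets M n L w x}"

definition kappa ::
  "'a measure \<Rightarrow> nat \<Rightarrow> (nat \<Rightarrow> real \<Rightarrow> real) \<Rightarrow> (nat \<Rightarrow> 'a set \<Rightarrow> real) \<Rightarrow> real" where
  "kappa M n L w = Inf {Min ((\<lambda>i. Max (insert (w i (A i) / lam_minus (L i))
                                     ((\<lambda>j. w j (A j) / lam_plus (L j)) ` ({..<n} - {i})))) ` {..<n})
                        | A. A \<in> partitions M n}"

end

theory Submission
  imports Defs
begin

lemma HI_bdd: "L \<in> H_I \<Longrightarrow> bdd_below (range L) \<and> bdd_above (range L)"
  unfolding H_I_def bdd_below_def bdd_above_def
  by (metis (no_types, lifting) less_eq_real_def mem_Collect_eq rangeE)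

lemma lam_minus_le: "L \<in> H_I \<Longrightarrow> lam_minus L \<le> L y"
  unfolding lam_minus_def using HI_bdd by (auto intro!: cInf_lower)

lemma le_lam_plus: "L \<in> H_I \<Longrightarrow> L y \<le> lam_plus L"
  unfolding lam_plus_def using HI_bdd by (auto intro!: cSup_upper)

lemma meas_gt: "(X::_\<Rightarrow>real) \<in> borel_measurable M \<Longrightarrow> {\<omega>\<in>space M. x < X \<omega>} \<in> sets M"
  using borel_measurable_iff_greater[of X M] by blast

lemma meas_le: "(X::_\<Rightarrow>real) \<in> borel_measurable M \<Longrightarrow> {\<omega>\<in>space M. X \<omega> \<le> x} \<in> sets M"
  using borel_measurable_iff_le[of X M] by blast

theorem mainTheorem13:
  fixes M :: "'a measure" and n :: nat
    and L :: "nat \<Rightarrow> real \<Rightarrow> real" and w :: "nat \<Rightarrow> 'a set \<Rightarrow> real"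
  assumes "n \<ge> 1"
    and "\<forall>i<n. L i \<in> H_I"
    and "\<forall>i<n. 0 < lam_minus (L i) \<and> lam_minus (L i) \<le> lam_plus (L i) \<and> lam_plus (L i) < 1"
    and "\<forall>i<n. capacity M (w i) \<and> continuous_capacity M (w i) \<and> subadditive_capacity M (w i)"
  shows "(kappa M n L w < 1 \<longrightarrow> (\<forall>X\<in>borel_measurable M. Gamma M n L w X = -\<infinity>))
       \<and> (kappa M n L w > 1 \<longrightarrow> (\<forall>X\<in>borel_measurable M. Gamma M n L w X > -\<infinity>))"
proof -
  have HI: "\<And>i. i < n \<Longrightarrow> L i \<in> H_I" using assms(2) by blast
  have lmpos: "\<And>i. i < n \<Longrightarrow> 0 < lam_minus (L i)" using assms(3) by blast
  have lppos: "\<And>i. i < n \<Longrightarrow> 0 < lam_plus (L i)" using assms(3) by force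
  have wnn: "\<And>i A. i < n \<Longrightarrow> A \<in> sets M \<Longrightarrow> 0 \<le> w i A"
    using assms(4) unfolding capacity_def by blast
  have wmono: "\<And>i A B. i < n \<Longrightarrow> A \<in> sets M \<Longrightarrow> B \<in> sets M \<Longrightarrow> A \<subseteq> B \<Longrightarrow> w i A \<le> w i B"
    using assms(4) unfolding capacity_def by blast
  have wsub: "\<And>i A B. i < n \<Longrightarrow> A \<in> sets M \<Longrightarrow> B \<in> sets M \<Longrightarrow> w i (A \<union> B) \<le> w i A + w i B"
    using assms(4) unfolding subadditive_capacity_def by blast
  have wcont: "\<And>i. i < n \<Longrightarrow> continuous_capacity M (w i)"
    using assms(4) by blast
  define F where "F A = Min ((\<lambda>i. Max (insert (w i (A i) / lam_minus (L i))
                                     ((\<lambda>j. w j (A j) / lam_plus (L j)) ` ({..<n} - {i})))) ` {..<n})" for A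
  have kdef: "kappa M n L w = Inf {F A | A. A \<in> partitions M n}"
    unfolding kappa_def F_def ..
  have "0 \<in> {..<n}" using assms(1) by simp
  hence n0: "{..<n} \<noteq> {}" by blast
  define P0 where "P0 = (\<lambda>l::nat. if l = 0 then space M else {})"
  have "P0 \<in> partitions M n"
    unfolding partitions_def P0_def disjoint_family_on_def using assms(1)
    by (auto split: if_splits)
  hence ne: "{F A | A. A \<in> partitions M n} \<noteq> {}" by blast
  have Fnn: "0 \<le> F A" if "A \<in> partitions M n" for A
  proof -
    have As: "\<And>i. i < n \<Longrightarrow> A i \<in> sets M" using that unfolding partitions_def by blast
    show ?thesis unfolding F_def
    proof (subst Min_ge_iff)
      show "finite ((\<lambda>i. Max (insert (w i (A i) / lam_minus (L i))
                                     ((\<lambda>j. w j (A j) / lam_plus (L j)) ` ({..<n} - {i})))) ` {..<n})" by simp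
      show "(\<lambda>i. Max (insert (w i (A i) / lam_minus (L i))
                                     ((\<lambda>j. w j (A j) / lam_plus (L j)) ` ({..<n} - {i})))) ` {..<n} \<noteq> {}"
        using n0 by simp
      show "\<forall>a\<in>(\<lambda>i. Max (insert (w i (A i) / lam_minus (L i))
                                     ((\<lambda>j. w j (A j) / lam_plus (L j)) ` ({..<n} - {i})))) ` {..<n}. 0 \<le> a"
      proof
        fix a assume "a \<in> (\<lambda>i. Max (insert (w i (A i) / lam_minus (L i))
                                     ((\<lambda>j. w j (A j) / lam_plus (L j)) ` ({..<n} - {i})))) ` {..<n}"
        then obtain i where i: "i < n" and a: "a = Max (insert (w i (A i) / lam_minus (L i))
                                     ((\<lambda>j. w j (A j) / lam_plus (L j)) ` ({..<n} - {i})))" by auto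
        have "0 \<le> w i (A i) / lam_minus (L i)" using wnn[OF i As[OF i]] lmpos[OF i] by simp
        also have "\<dots> \<le> a" unfolding a by (rule Max_ge) auto
        finally show "0 \<le> a" .
      qed
    qed
  qed
  have bdd: "bdd_below {F A | A. A \<in> partitions M n}"
    unfolding bdd_below_def using Fnn by blast
  show ?thesis
  proof (intro conjI impI ballI)
    fix X :: "'a \<Rightarrow> real" assume k1: "kappa M n L w < 1" and X: "X \<in> borel_measurable M"
    obtain A where A: "A \<in> partitions M n" and FA: "F A < 1"
      using cInf_lessD[OF ne k1[unfolded kdef]] by blast
    have As: "\<And>i. i < n \<Longrightarrow> A i \<in> sets M" and Aun: "(\<Union>i<n. A i) = space M"
      using A unfolding partitions_def by blast+
    obtain i where i: "i < n" and
      Mi: "Max (insert (w i (A i) / lam_minus (L i))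
                                     ((\<lambda>j. w j (A j) / lam_plus (L j)) ` ({..<n} - {i}))) < 1"
      using FA unfolding F_def by (subst (asm) Min_less_iff) (use n0 in auto)
    have "w i (A i) / lam_minus (L i) < 1" using Mi by (subst (asm) Max_less_iff) auto
    hence wi: "w i (A i) < lam_minus (L i)" using lmpos[OF i] by (simp add: divide_less_eq)
    have "\<forall>j. \<exists>y. j < n \<longrightarrow> j \<noteq> i \<longrightarrow> w j (A j) < L j y"
    proof (intro allI)
      fix j
      show "\<exists>y. j < n \<longrightarrow> j \<noteq> i \<longrightarrow> w j (A j) < L j y"
      proof (cases "j < n \<and> j \<noteq> i")
        case True
        have "w j (A j) / lam_plus (L j) < 1" using Mi True by (subst (asm) Max_less_iff) auto
        hence "w j (A j) < lam_plus (L j)" using lppos True by (simp add: divide_less_eq)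
        moreover have "bdd_above (range (L j))" using HI_bdd[OF HI[of j]] True by simp
        ultimately have "\<exists>z\<in>range (L j). w j (A j) < z"
          unfolding lam_plus_def by (subst (asm) less_cSup_iff) auto
        thus ?thesis by blast
      qed auto
    qed
    then obtain y0 where y0: "\<And>j. j < n \<Longrightarrow> j \<noteq> i \<Longrightarrow> w j (A j) < L j (y0 j)"
      by metis
    have allx: "ereal x \<in> {ereal x | x. {\<omega>\<in>space M. X \<omega> > x} \<in> admissible_sets M n L w x}" for x
    proof -
      define G where "G = {\<omega>\<in>space M. X \<omega> > x}"
      have G: "G \<in> sets M" unfolding G_def using meas_gt[OF X] by blast
      define B where "B l = A l \<inter> G" for l
      define y where "y l = (if l = i then x - (\<Sum>l\<in>{..<n}-{i}. y0 l) else y0 l)" for l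
      have "(\<Sum>l<n. y l) = y i + (\<Sum>l\<in>{..<n}-{i}. y l)"
        using i by (subst sum.remove[of "{..<n}" i]) auto
      also have "(\<Sum>l\<in>{..<n}-{i}. y l) = (\<Sum>l\<in>{..<n}-{i}. y0 l)"
        by (rule sum.cong) (auto simp: y_def)
      finally have ysum: "(\<Sum>l<n. y l) = x" by (simp add: y_def)
      have "G \<subseteq> space M" unfolding G_def by blast
      hence Gun: "G = (\<Union>l<n. B l)" unfolding B_def using Aun by blast
      have Bs: "\<forall>l<n. B l \<in> sets M" unfolding B_def using As G by blast
      have Bw: "\<forall>l<n. w l (B l) \<le> L l (y l)"
      proof (intro allI impI)
        fix l assume l: "l < n"
        have "w l (B l) \<le> w l (A l)" using wmono[OF l] Bs l As[OF l] unfolding B_def by blast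
        moreover have "w l (A l) \<le> L l (y l)"
        proof (cases "l = i")
          case True
          thus ?thesis using wi lam_minus_le[OF HI[OF i]] by (metis less_imp_le order_trans)
        next
          case False
          thus ?thesis using y0[OF l False] by (simp add: y_def)
        qed
        ultimately show "w l (B l) \<le> L l (y l)" by linarith
      qed
      have "G \<in> admissible_sets M n L w x"
        unfolding admissible_sets_def using Gun Bs ysum Bw by blast
      thus ?thesis unfolding G_def by blast
    qed
    show "Gamma M n L w X = -\<infinity>"
      unfolding Gamma_def
      by (rule ereal_bot, rule Inf_lower, rule allx)
  next
    fix X :: "'a \<Rightarrow> real" assume k1: "kappa M n L w > 1" and X: "X \<in> borel_measurable M"
    show "Gamma M n L w X > -\<infinity>"
    proof (rule ccontr)
      assume "\<not> Gamma M n L w X > -\<infinity>"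
      hence Gm: "Gamma M n L w X = -\<infinity>" by simp
      define \<epsilon> where "\<epsilon> = (kappa M n L w - 1) / 4"
      have ep: "\<epsilon> > 0" unfolding \<epsilon>_def using k1 by simp
      have "eventually (\<lambda>y. \<forall>i\<in>{..<n}. L i y < lam_minus (L i) * (1 + \<epsilon>)) at_bot"
      proof (rule eventually_ball_finite)
        show "finite {..<n}" by simp
        show "\<forall>i\<in>{..<n}. eventually (\<lambda>y. L i y < lam_minus (L i) * (1 + \<epsilon>)) at_bot"
        proof
          fix i assume "i \<in> {..<n}"
          hence i: "i < n" by simp
          have "lam_minus (L i) < lam_minus (L i) * (1 + \<epsilon>)" using lmpos[OF i] ep by simp
          then obtain z where "z \<in> range (L i)" "z < lam_minus (L i) * (1 + \<epsilon>)"
            using cInf_lessD[of "range (L i)"] unfolding lam_minus_def by blast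
          then obtain y0 where y0: "L i y0 < lam_minus (L i) * (1 + \<epsilon>)" by blast
          have mono: "mono (L i)" using HI[OF i] unfolding H_I_def by blast
          show "eventually (\<lambda>y. L i y < lam_minus (L i) * (1 + \<epsilon>)) at_bot"
            unfolding eventually_at_bot_linorder
            using y0 mono by (meson le_less_trans monoD)
        qed
      qed
      then obtain N where N: "\<And>y i. y \<le> N \<Longrightarrow> i < n \<Longrightarrow> L i y < lam_minus (L i) * (1 + \<epsilon>)"
        unfolding eventually_at_bot_linorder by auto
      define C where "C k = {\<omega>\<in>space M. X \<omega> \<le> - real k}" for k
      have Cs: "\<And>k. C k \<in> sets M" unfolding C_def using meas_le[OF X] by blast
      have Cdec: "decseq C" unfolding decseq_def C_def by auto
      have Cint: "(\<Inter>k. C k) = {}"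
      proof -
        have "\<omega> \<notin> C k" if "- X \<omega> < real k" for \<omega> k using that unfolding C_def by auto
        note nC = this
        show ?thesis
        proof (rule equals0I)
          fix \<omega> assume om: "\<omega> \<in> (\<Inter>k. C k)"
          obtain k where "- X \<omega> < real k" using reals_Archimedean2 by blast
          thus False using nC om by blast
        qed
      qed
      have "eventually (\<lambda>k. \<forall>i\<in>{..<n}. w i (C k) < \<epsilon> * lam_minus (L i)) sequentially"
      proof (rule eventually_ball_finite)
        show "finite {..<n}" by simp
        show "\<forall>i\<in>{..<n}. eventually (\<lambda>k. w i (C k) < \<epsilon> * lam_minus (L i)) sequentially"
        proof
          fix i assume "i \<in> {..<n}"
          hence i: "i < n" by simp
          have "(\<lambda>k. w i (C k)) \<longlonglongrightarrow> 0"
            using wcont[OF i] Cs Cdec Cint unfolding continuous_capacity_def by blast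
          moreover have "\<epsilon> * lam_minus (L i) > 0" using ep lmpos[OF i] by simp
          ultimately show "eventually (\<lambda>k. w i (C k) < \<epsilon> * lam_minus (L i)) sequentially"
            using order_tendstoD(2) by blast
        qed
      qed
      then obtain m where m: "\<And>i. i < n \<Longrightarrow> w i (C m) < \<epsilon> * lam_minus (L i)"
        unfolding eventually_sequentially by auto
      have "Inf {ereal x | x. {\<omega>\<in>space M. X \<omega> > x} \<in> admissible_sets M n L w x}
             < ereal (min (- real m) (real n * N))"
        using Gm unfolding Gamma_def by simp
      then obtain x where x: "x < min (- real m) (real n * N)"
        and xadm: "{\<omega>\<in>space M. X \<omega> > x} \<in> admissible_sets M n L w x"
        unfolding Inf_less_iff by auto
      define G where "G = {\<omega>\<in>space M. X \<omega> > x}"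
      obtain A y where Gun: "G = (\<Union>i<n. A i)" and As: "\<And>i. i < n \<Longrightarrow> A i \<in> sets M"
        and ysum: "(\<Sum>i<n. y i) = x" and Aw: "\<And>i. i < n \<Longrightarrow> w i (A i) \<le> L i (y i)"
        using xadm unfolding admissible_sets_def G_def by blast
      have "\<exists>i<n. y i \<le> N"
      proof (rule ccontr)
        assume "\<not> (\<exists>i<n. y i \<le> N)"
        hence "\<And>i. i \<in> {..<n} \<Longrightarrow> N < y i" by auto
        hence "(\<Sum>i<n. N) < (\<Sum>i<n. y i)" using n0 by (intro sum_strict_mono) auto
        thus False using ysum x by simp
      qed
      then obtain i where i: "i < n" and yi: "y i \<le> N" by blast
      define C0 where "C0 = space M - G"
      have C0s: "C0 \<in> sets M" unfolding C0_def G_def using meas_gt[OF X] by blast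
      have "C0 \<subseteq> C m" unfolding C0_def G_def C_def using x by auto
      hence wC0: "w i C0 < \<epsilon> * lam_minus (L i)"
        using wmono[OF i C0s Cs] m[OF i] by fastforce
      define A' where "A' l = (if l = i then A l \<union> C0 else A l)" for l
      define B where "B = disjointed A'"
      have A's: "\<And>l. l < n \<Longrightarrow> A' l \<in> sets M" unfolding A'_def using As C0s by auto
      have Bs: "\<And>l. l < n \<Longrightarrow> B l \<in> sets M"
      proof -
        fix l assume l: "l < n"
        have "(\<Union>j\<in>{0..<l}. A' j) \<in> sets M" using A's l by (intro sets.finite_UN) auto
        thus "B l \<in> sets M" unfolding B_def disjointed_def using A's[OF l] by blast
      qed
      have BA': "\<And>l. B l \<subseteq> A' l" unfolding B_def by (rule disjointed_subset)
      have "(\<Union>l<n. B l) = (\<Union>l<n. A' l)"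
        unfolding B_def using finite_UN_disjointed_eq[of A' n] by (simp add: atLeast0LessThan)
      also have "\<dots> = G \<union> C0" unfolding Gun A'_def using i by (auto split: if_splits)
      also have "\<dots> = space M" unfolding C0_def G_def by auto
      finally have Bun: "(\<Union>l<n. B l) = space M" .
      have Bp: "B \<in> partitions M n"
        unfolding partitions_def using Bs Bun
          disjoint_family_on_mono[OF subset_UNIV disjoint_family_disjointed[of A']]
        unfolding B_def by blast
      have "kappa M n L w \<le> F B" unfolding kdef using Bp bdd by (intro cInf_lower) auto
      also have "F B \<le> Max (insert (w i (B i) / lam_minus (L i))
                                     ((\<lambda>j. w j (B j) / lam_plus (L j)) ` ({..<n} - {i})))"
        unfolding F_def using i by (intro Min_le) auto
      also have "\<dots> \<le> 1 + 2 * \<epsilon>"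
      proof (subst Max_le_iff, simp, simp, intro ballI)
        fix a assume "a \<in> insert (w i (B i) / lam_minus (L i))
                                     ((\<lambda>j. w j (B j) / lam_plus (L j)) ` ({..<n} - {i}))"
        then consider "a = w i (B i) / lam_minus (L i)"
          | j where "j < n" "j \<noteq> i" "a = w j (B j) / lam_plus (L j)" by auto
        thus "a \<le> 1 + 2 * \<epsilon>"
        proof cases
          case 1
          have "w i (B i) \<le> w i (A' i)" using wmono[OF i Bs[OF i] A's[OF i] BA'] .
          also have "\<dots> \<le> w i (A i) + w i C0" unfolding A'_def using wsub[OF i As[OF i] C0s] by simp
          also have "\<dots> \<le> lam_minus (L i) * (1 + \<epsilon>) + \<epsilon> * lam_minus (L i)"
            using Aw[OF i] N[OF yi i] wC0 by linarith
          also have "\<dots> = lam_minus (L i) * (1 + 2 * \<epsilon>)" by (simp add: algebra_simps)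
          finally show ?thesis using 1 lmpos[OF i] by (simp add: divide_le_eq mult.commute)
        next
          case 2
          have "w j (B j) \<le> w j (A' j)" using wmono[OF 2(1) Bs[OF 2(1)] A's[OF 2(1)] BA'] .
          also have "\<dots> = w j (A j)" unfolding A'_def using 2 by simp
          also have "\<dots> \<le> lam_plus (L j)" using Aw[OF 2(1)] le_lam_plus[OF HI[OF 2(1)]] by (metis order_trans)
          finally have "a \<le> 1" using 2 lppos[OF 2(1)] by (simp add: divide_le_eq)
          thus ?thesis using ep by simp
        qed
      qed
      finally have "kappa M n L w \<le> 1 + 2 * \<epsilon>" .
      thus False unfolding \<epsilon>_def using k1 by (simp add: field_simps)
    qed
  qed
qed

end
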